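(* Let $n \ge 1$ be an integer and let $k$ be an integer with $0 \le k \le \lfloor n/2 \rfloor$. Let $b_k \in B_{2n}$ be the $k$-th decreasing product component. Then the left and right derived braids of $b_k$ coincide: $L(b_k) = R(b_k)$ in $B_{3n}$.
   Context: $B_m$ denotes the Artin braid group on $m$ strands, with standard generators $\sigma_1,\dots,\sigma_{m-1}$ ($\sigma_i$ crosses the strands in positions $i$ and $i+1$; all generators are taken with the same crossing type). Braids are drawn top to bottom, and the product $xy$ means $x$ followed (below) by $y$. For braids $x\in B_a$, $y \in B_b$, $x\otimes y \in B_{a+b}$ denotes placing $y$ to the right of $x$; $\mathrm{id}_m$ is the trivial braid on $m$ strands. Cabling: given $y \in B_m$ and positive integers $w_1,\dots,w_m$ with $\sum w_i = N$, the cabled braid $y^{(w_1,\dots,w_m)} \in B_N$ is obtained by replacing the strand of $y$ starting at position $i$ (at the top) by a ribbon of $w_i$ parallel adjacent strands (a "$w_i$-ribbon") that follows that strand throughout. Derived braids: for $x \in B_{2n}$, the left derived braid is $Lx = (x\otimes \mathrm{id}_n)\cdot x^{(2,\dots,2,1,\dots,1)} \in B_{3n}$, where there are $n$ entries $2$ followed by $n$ entries $1$; i.e. one attaches $n$ identity strands on the right of $x$, then at the bottom of $x$ groups its $2n$ strands into $n$ consecutive pairs (2-ribbons), and braids the resulting $2n$ objects ($n$ 2-ribbons followed by $n$ single strands) according to $x$. The right derived braid is $Rx = (\mathrm{id}_n \otimes x)\cdot x^{(1,\dots,1,2,\dots,2)} \in B_{3n}$ ($n$ entries $1$ followed by $n$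 entries $2$), i.e. the same construction with the $n$ identity strands attached on the left. (For $n=1$, $x=\sigma_1$, the equation $Lx=Rx$ is the Yang–Baxter equation $\sigma_1\sigma_2\sigma_1=\sigma_2\sigma_1\sigma_2$.) Decreasing product components in $B_{2n}$: $b_0 = \sigma_1^{(n,n)}$, the braid in which the $n$-ribbon of strands $1,\dots,n$ crosses the $n$-ribbon of strands $n+1,\dots,2n$; and for $1 \le k \le \lfloor n/2\rfloor$, $b_k = \sigma_2^{(k,\,n-k,\,n-k,\,k)}$, where $\sigma_2\in B_4$, i.e. with strands grouped into consecutive ribbons of widths $k, n-k, n-k, k$, the two middle $(n-k)$-ribbons cross once and the outer $k$-ribbons are identity. *)

theory Defs
  imports Main
begin

text \<open>Braid words: a letter (i, True) is sigma_i, (i, False) is sigma_i inverse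
  (indices 1-based). A word is read top to bottom (left to right).\<close>

type_synonym bword = "(nat \<times> bool) list"

definition valid_word :: "nat \<Rightarrow> bword \<Rightarrow> bool" where
  "valid_word m w \<longleftrightarrow> (\<forall>l \<in> set w. 1 \<le> fst l \<and> fst l < m)"

inductive braid_eq :: "nat \<Rightarrow> bword \<Rightarrow> bword \<Rightarrow> bool" for m where
  refl: "valid_word m w \<Longrightarrow> braid_eq m w w"
| sym: "braid_eq m u v \<Longrightarrow> braid_eq m v u"
| trans: "braid_eq m u v \<Longrightarrow> braid_eq m v w \<Longrightarrow> braid_eq m u w"
| cong: "braid_eq m u v \<Longrightarrow> valid_word m a \<Longrightarrow> valid_word m c
          \<Longrightarrow> braid_eq m (a @ u @ c) (a @ v @ c)"
| cancel: "1 \<le> i \<Longrightarrow> i < m \<Longrightarrow> braid_eq m [(i, b), (i, \<not> b)] []"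
| far_comm: "1 \<le> i \<Longrightarrow> i + 1 < j \<Longrightarrow> j < m
          \<Longrightarrow> braid_eq m [(i, True), (j, True)] [(j, True), (i, True)]"
| braid_rel: "1 \<le> i \<Longrightarrow> i + 1 < m
          \<Longrightarrow> braid_eq m [(i, True), (i+1, True), (i, True)] [(i+1, True), (i, True), (i+1, True)]"

definition inv_word :: "bword \<Rightarrow> bword" where
  "inv_word w = map (\<lambda>(i, b). (i, \<not> b)) (rev w)"

text \<open>Positive crossing of a p-ribbon (positions s+1..s+p) over/under a q-ribbon
  (positions s+p+1..s+p+q), all crossings of the same type as the generators:
  the strands of the left ribbon, rightmost first, are each moved right across
  the q strands.\<close>

definition ribbon_cross :: "nat \<Rightarrow> nat \<Rightarrow> nat \<Rightarrow> bword" where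
  "ribbon_cross s p q = concat (map (\<lambda>j. map (\<lambda>t. (s + j + t, True)) [1..<q+1]) (rev [0..<p]))"

text \<open>Cabling of a single letter, given the current widths ws (ws ! (j-1) is the
  width of the ribbon at position j just above the letter).\<close>

definition letter_cable :: "nat list \<Rightarrow> nat \<times> bool \<Rightarrow> bword" where
  "letter_cable ws l = (let i = fst l; s = sum_list (take (i - 1) ws);
       p = ws ! (i - 1); q = ws ! i
     in if snd l then ribbon_cross s p q else inv_word (ribbon_cross s q p))"

definition swap_widths :: "nat list \<Rightarrow> nat \<Rightarrow> nat list" where
  "swap_widths ws i = ws[i - 1 := ws ! i, i := ws ! (i - 1)]"

text \<open>cable y ws = y^(w_1,...,w_m): the strand starting at (top) position j becomes
  a ribbon of width ws ! (j-1).\<close>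

fun cable :: "bword \<Rightarrow> nat list \<Rightarrow> bword" where
  "cable [] ws = []"
| "cable (l # w) ws = letter_cable ws l @ cable w (swap_widths ws (fst l))"

definition shift_word :: "nat \<Rightarrow> bword \<Rightarrow> bword" where
  "shift_word n w = map (\<lambda>(i, b). (i + n, b)) w"

definition left_derived :: "nat \<Rightarrow> bword \<Rightarrow> bword" where
  "left_derived n x = x @ cable x (replicate n 2 @ replicate n 1)"

definition right_derived :: "nat \<Rightarrow> bword \<Rightarrow> bword" where
  "right_derived n x = shift_word n x @ cable x (replicate n 1 @ replicate n 2)"

definition dpc :: "nat \<Rightarrow> nat \<Rightarrow> bword" where
  "dpc n k = (if k = 0 then cable [(1, True)] [n, n]
              else cable [(2, True)] [k, n - k, n - k, k])"

end

theory Submission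
  imports Defs
begin

lemma beq_valid: "braid_eq M u v \<Longrightarrow> valid_word M u \<and> valid_word M v"
  by (induction rule: braid_eq.induct) (auto simp: valid_word_def)

lemma valid_app[simp]: "valid_word M (u @ v) \<longleftrightarrow> valid_word M u \<and> valid_word M v"
  by (auto simp: valid_word_def)

lemma valid_Nil[simp]: "valid_word M []" by (simp add: valid_word_def)

lemma beq_app: "braid_eq M u u' \<Longrightarrow> braid_eq M v v' \<Longrightarrow> braid_eq M (u @ v) (u' @ v')"
proof -
  assume a: "braid_eq M u u'" and b: "braid_eq M v v'"
  have vv: "valid_word M v" "valid_word M u'" using beq_valid[OF a] beq_valid[OF b] by auto
  have "braid_eq M ([] @ u @ v) ([] @ u' @ v)" by (rule braid_eq.cong[OF a]) (use vv in auto)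
  moreover have "braid_eq M (u' @ v @ []) (u' @ v' @ [])" by (rule braid_eq.cong[OF b]) (use vv in auto)
  ultimately show ?thesis by (auto intro: braid_eq.trans)
qed

lemma beq_refl: "valid_word M w \<Longrightarrow> braid_eq M w w" by (rule braid_eq.refl)

lemma beq_appL: "braid_eq M v v' \<Longrightarrow> valid_word M u \<Longrightarrow> braid_eq M (u @ v) (u @ v')"
  by (rule beq_app[OF beq_refl])

lemma beq_appR: "braid_eq M u u' \<Longrightarrow> valid_word M v \<Longrightarrow> braid_eq M (u @ v) (u' @ v)"
  by (rule beq_app[OF _ beq_refl])

definition inr :: "nat \<Rightarrow> nat \<Rightarrow> bword \<Rightarrow> bool" where
  "inr lo hi w \<longleftrightarrow> (\<forall>l\<in>set w. snd l \<and> lo \<le> fst l \<and> fst l \<le> hi)"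

lemma inr_valid: "inr lo hi w \<Longrightarrow> 1 \<le> lo \<Longrightarrow> hi < M \<Longrightarrow> valid_word M w"
  by (fastforce simp: inr_def valid_word_def)

lemma inr_Cons[simp]: "inr lo hi (l # w) \<longleftrightarrow> snd l \<and> lo \<le> fst l \<and> fst l \<le> hi \<and> inr lo hi w"
  by (auto simp: inr_def)
lemma inr_Nil[simp]: "inr lo hi []" by (simp add: inr_def)
lemma inr_app[simp]: "inr lo hi (u @ v) \<longleftrightarrow> inr lo hi u \<and> inr lo hi v"
  by (auto simp: inr_def)

lemma comm2: "1 \<le> i \<Longrightarrow> j < M \<Longrightarrow> i + 1 < j \<or> j + 1 < i \<Longrightarrow> 1 \<le> j \<Longrightarrow> i < M \<Longrightarrow>
   braid_eq M [(i, True), (j, True)] [(j, True), (i, True)]"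
  by (metis braid_eq.far_comm braid_eq.sym)

lemma comm_letter:
  assumes "inr lo hi w" "1 \<le> lo" "hi < M" "1 \<le> i" "i < M" "i + 2 \<le> lo \<or> hi + 2 \<le> i"
  shows "braid_eq M ((i, True) # w) (w @ [(i, True)])"
  using assms
proof (induction w)
  case Nil
  have "braid_eq M [(i, True)] [(i, True)]" by (rule beq_refl) (use Nil in \<open>simp add: valid_word_def\<close>)
  then show ?case by simp
next
  case (Cons l w)
  obtain j where l: "l = (j, True)" using Cons.prems by (cases l) auto
  have j: "lo \<le> j" "j \<le> hi" using Cons.prems l by auto
  have vw: "valid_word M w" using Cons.prems by (intro inr_valid[of lo hi]) auto
  have "braid_eq M ([] @ [(i, True), (j, True)] @ w) ([] @ [(j, True), (i, True)] @ w)"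
    by (rule braid_eq.cong[OF comm2]) (use Cons.prems j vw in auto)
  moreover have "braid_eq M ([(j,True)] @ ((i, True) # w)) ([(j,True)] @ (w @ [(i, True)]))"
    by (rule beq_appL[OF Cons.IH]) (use Cons.prems j in \<open>auto simp: valid_word_def\<close>)
  ultimately show ?case using l by (auto intro: braid_eq.trans)
qed

lemma comm_words:
  assumes "inr lo1 hi1 u" "inr lo2 hi2 v" "1 \<le> lo1" "1 \<le> lo2" "hi1 < M" "hi2 < M"
    "hi1 + 2 \<le> lo2 \<or> hi2 + 2 \<le> lo1"
  shows "braid_eq M (u @ v) (v @ u)"
  using assms
proof (induction u)
  case Nil
  have "valid_word M v" by (rule inr_valid[of lo2 hi2]) (use Nil in auto)
  then show ?case by (auto intro: beq_refl)
next
  case (Cons l u)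
  obtain i where l: "l = (i, True)" using Cons.prems by (cases l) auto
  have vu: "valid_word M u" using Cons.prems by (intro inr_valid[of lo1 hi1]) auto
  have "braid_eq M ([(i,True)] @ (u @ v)) ([(i,True)] @ (v @ u))"
    by (rule beq_appL[OF Cons.IH]) (use Cons.prems l in \<open>auto simp: valid_word_def\<close>)
  moreover have "braid_eq M (((i, True) # v) @ u) ((v @ [(i, True)]) @ u)"
    by (rule beq_appR[OF comm_letter[of lo2 hi2]]) (use Cons.prems l vu in auto)
  ultimately show ?case using l by (auto intro: braid_eq.trans)
qed


definition row :: "nat \<Rightarrow> nat \<Rightarrow> bword" where
  "row a q = map (\<lambda>t. (a + t, True)) [1..<q+1]"

abbreviation rc where "rc \<equiv> ribbon_cross"

lemma row_0[simp]: "row a 0 = []" by (simp add: row_def)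
lemma row_Suc: "row a (Suc q) = row a q @ [(a + Suc q, True)]" by (simp add: row_def)
lemma row_inr: "inr (a+1) (a+q) (row a q)" by (auto simp: row_def inr_def)
lemma row_add: "row a (q1 + q2) = row a q1 @ row (a + q1) q2"
  by (induction q2) (simp_all add: row_Suc add.assoc)

lemma rc_row: "rc s p q = concat (map (\<lambda>j. row (s + j) q) (rev [0..<p]))"
  by (simp add: ribbon_cross_def row_def add.assoc)

lemma rc_0[simp]: "rc s 0 q = []" by (simp add: rc_row)
lemma rc_Suc: "rc s (Suc p) q = row (s + p) q @ rc s p q" by (simp add: rc_row)
lemma rc_q0[simp]: "rc s p 0 = []" by (induction p) (simp_all add: rc_Suc)
lemma rc_add: "rc s (p1 + p2) q = rc (s + p1) p2 q @ rc s p1 q"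
  by (induction p2) (simp_all add: rc_Suc add.assoc)

lemma rc_inr: "inr (s+1) (s+p+q-1) (rc s p q)"
proof (induction p)
  case 0 then show ?case by simp
next
  case (Suc p)
  have "inr (s+1) (s+Suc p+q-1) (rc s p q)" using Suc by (auto simp: inr_def)
  moreover have "inr (s+1) (s+Suc p+q-1) (row (s+p) q)" using row_inr[of "s+p" q] by (auto simp: inr_def)
  ultimately show ?case by (simp add: rc_Suc)
qed

lemma inr_mono: "inr lo hi w \<Longrightarrow> lo' \<le> lo \<Longrightarrow> hi \<le> hi' \<Longrightarrow> inr lo' hi' w"
  by (fastforce simp: inr_def)

lemma rc_valid: "s + p + q \<le> M \<Longrightarrow> valid_word M (rc s p q)"
proof (cases "p = 0")
  case False then show "s + p + q \<le> M \<Longrightarrow> ?thesis" by (intro inr_valid[OF rc_inr]) auto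
qed simp

lemma beq_trans_eq: "braid_eq M u v \<Longrightarrow> braid_eq M v' w \<Longrightarrow> v = v' \<Longrightarrow> braid_eq M u w"
  using braid_eq.trans by blast

lemma beq_chain: "braid_eq M u v \<Longrightarrow> braid_eq M v' w \<Longrightarrow> v = v' \<Longrightarrow> u' = u \<Longrightarrow> w' = w \<Longrightarrow> braid_eq M u' w'"
  using braid_eq.trans by blast

lemma rc_split_right:
  assumes "s + p + q1 + q2 \<le> M"
  shows "braid_eq M (rc s p (q1 + q2)) (rc s p q1 @ rc (s + q1) p q2)"
  using assms
proof (induction p)
  case 0 then show ?case by (simp add: beq_refl)
next
  case (Suc p)
  have IH: "braid_eq M (rc s p (q1 + q2)) (rc s p q1 @ rc (s + q1) p q2)" using Suc by simp
  have v1: "valid_word M (row (s + p) q1 @ row (s + p + q1) q2)"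
    using Suc.prems by (intro inr_valid[of "s+p+1" "s+p+q1+q2"]) (auto intro: inr_mono[OF row_inr])
  have s1: "braid_eq M ((row (s + p) q1 @ row (s + p + q1) q2) @ rc s p (q1 + q2))
                    ((row (s + p) q1 @ row (s + p + q1) q2) @ (rc s p q1 @ rc (s + q1) p q2))"
    by (rule beq_appL[OF IH v1])
  have c: "braid_eq M (row (s + p + q1) q2 @ rc s p q1) (rc s p q1 @ row (s + p + q1) q2)"
  proof (cases "p = 0 \<or> q1 = 0")
    case True then show ?thesis using v1 by (auto intro: beq_refl)
  next
    case False
    show ?thesis
      by (rule comm_words[OF row_inr rc_inr]) (use Suc.prems False in auto)
  qed
  have s2: "braid_eq M (row (s + p) q1 @ (row (s + p + q1) q2 @ rc s p q1) @ rc (s + q1) p q2)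
                       (row (s + p) q1 @ (rc s p q1 @ row (s + p + q1) q2) @ rc (s + q1) p q2)"
    apply (rule beq_appL[OF beq_appR[OF c]])
    using Suc.prems v1 by (auto intro!: rc_valid)
  show ?case
    using beq_trans_eq[OF s1 s2] by (simp add: rc_Suc row_add add.assoc add.commute add.left_commute)
qed


lemma row_valid: "a + q < M \<Longrightarrow> valid_word M (row a q)"
  by (rule inr_valid[OF row_inr]) auto

lemma core:
  assumes "a + q + 2 \<le> M"
  shows "braid_eq M ((a+1,True) # row (a+1) q @ row a q) (row (a+1) q @ row a q @ [(a+1+q,True)])"
  using assms
proof (induction q)
  case 0
  then show ?case by (auto intro!: beq_refl simp: valid_word_def)
next
  case (Suc q)
  define X where "X = row (a+1) q"
  define Y where "Y = row a q"
  define i where "i = a + q + 1"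
  have vX: "valid_word M X" "valid_word M Y" unfolding X_def Y_def using Suc.prems
    by (auto intro!: row_valid)
  have vi: "valid_word M [(i,True),(i+1,True),(a+1,True)]" using Suc.prems by (auto simp: valid_word_def i_def)
  have A: "braid_eq M ((i+1,True) # Y) (Y @ [(i+1,True)])"
    unfolding Y_def i_def by (rule comm_letter[OF row_inr]) (use Suc.prems in auto)
  have s1: "braid_eq M ([(a+1,True)] @ X @ ((i+1,True) # Y) @ [(i,True)]) ([(a+1,True)] @ X @ (Y @ [(i+1,True)]) @ [(i,True)])"
    apply (rule beq_appL, rule beq_appL, rule beq_appR[OF A])
    using vX vi by (auto simp: valid_word_def)
  have IH: "braid_eq M ((a+1,True) # X @ Y) (X @ Y @ [(i,True)])"
    using Suc by (simp add: X_def Y_def i_def add.commute add.left_commute)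
  have s2: "braid_eq M (((a+1,True) # X @ Y) @ [(i+1,True),(i,True)]) ((X @ Y @ [(i,True)]) @ [(i+1,True),(i,True)])"
    by (rule beq_appR[OF IH]) (use vi in \<open>auto simp: valid_word_def\<close>)
  have br: "braid_eq M [(i,True),(i+1,True),(i,True)] [(i+1,True),(i,True),(i+1,True)]"
    by (rule braid_eq.braid_rel) (use Suc.prems in \<open>auto simp: i_def\<close>)
  have s3: "braid_eq M ((X @ Y) @ [(i,True),(i+1,True),(i,True)]) ((X @ Y) @ [(i+1,True),(i,True),(i+1,True)])"
    by (rule beq_appL[OF br]) (use vX in auto)
  have s4: "braid_eq M (X @ (Y @ [(i+1,True)]) @ [(i,True),(i+1,True)]) (X @ ((i+1,True) # Y) @ [(i,True),(i+1,True)])"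
    apply (rule beq_appL, rule beq_appR[OF braid_eq.sym[OF A]])
    using vX vi by (auto simp: valid_word_def)
  have "braid_eq M ([(a+1,True)] @ X @ ((i+1,True) # Y) @ [(i,True)]) (X @ ((i+1,True) # Y) @ [(i,True),(i+1,True)])"
    by (rule beq_trans_eq[OF beq_trans_eq[OF beq_trans_eq[OF s1 s2] s3] s4]) simp_all
  then show ?case
    by (simp add: X_def Y_def i_def row_Suc)
qed

lemma nat_letter:
  assumes "s + 1 \<le> i" "i + 1 \<le> s + p" "s + p + q \<le> M"
  shows "braid_eq M ((i,True) # rc s p q) (rc s p q @ [(i+q,True)])"
proof (cases "q = 0")
  case True then show ?thesis using assms by (auto intro!: beq_refl simp: valid_word_def)
next
  case False
  define j where "j = i - s - 1"
  have j: "i = s + j + 1" using assms(1) unfolding j_def by simp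
  define r where "r = p - j - 2"
  have r: "p = j + 2 + r" using assms(2) j unfolding r_def by simp
  define Z where "Z = rc (s+j+2) r q"
  define X where "X = row (s+j+1) q"
  define Y where "Y = row (s+j) q"
  define W where "W = rc s j q"
  have d1: "rc s (j + (2 + r)) q = rc (s+j) (2+r) q @ rc s j q" by (rule rc_add)
  have d2: "rc (s+j) (2+r) q = rc (s+j+2) r q @ rc (s+j) 2 q" by (rule rc_add)
  have d3: "rc (s+j) 2 q = row (s+j+1) q @ row (s+j) q" by (simp add: numeral_2_eq_2 rc_Suc)
  have dec: "rc s p q = Z @ X @ Y @ W"
    unfolding Z_def X_def Y_def W_def using d1 d2 d3 r by (simp add: add.assoc)
  have vZ: "valid_word M Z" unfolding Z_def using assms by (auto intro!: rc_valid simp: j r)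
  have vX: "valid_word M X" "valid_word M Y" unfolding X_def Y_def using assms
    by (auto intro!: row_valid simp: j r)
  have vW: "valid_word M W" unfolding W_def using assms by (auto intro!: rc_valid simp: j r)
  have Zi: "inr (i+2) (M-1) Z" unfolding Z_def
    by (rule inr_mono[OF rc_inr]) (use assms in \<open>auto simp: j r\<close>)
  have Wi: "inr 1 (i+q-2) W" unfolding W_def
    by (rule inr_mono[OF rc_inr]) (use assms False in \<open>auto simp: j r\<close>)
  have s1: "braid_eq M (((i,True) # Z) @ (X @ Y @ W)) ((Z @ [(i,True)]) @ (X @ Y @ W))"
    by (rule beq_appR[OF comm_letter[OF Zi]]) (use assms vX vW in \<open>auto simp: j r\<close>)
  have C: "braid_eq M ((i,True) # X @ Y) (X @ Y @ [(i+q,True)])"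
    unfolding X_def Y_def j using core[of "s+j" q M] assms by (simp add: j r add.commute add.left_commute)
  have s2: "braid_eq M (Z @ ((i,True) # X @ Y) @ W) (Z @ (X @ Y @ [(i+q,True)]) @ W)"
    by (rule beq_appL[OF beq_appR[OF C vW] vZ])
  have s3: "braid_eq M ((Z @ X @ Y) @ ((i+q,True) # W)) ((Z @ X @ Y) @ (W @ [(i+q,True)]))"
    by (rule beq_appL[OF comm_letter[OF Wi]]) (use assms vX vZ False in \<open>auto simp: j r\<close>)
  show ?thesis unfolding dec
    by (rule beq_chain[OF beq_trans_eq[OF s1 s2] s3]) simp_all
qed

lemma inr_shift: "inr lo hi w \<Longrightarrow> inr (lo+d) (hi+d) (shift_word d w)"
  by (auto simp: inr_def shift_word_def)

lemma shift_Cons[simp]: "shift_word d ((i,b) # w) = (i+d,b) # shift_word d w"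
  by (simp add: shift_word_def)
lemma shift_Nil[simp]: "shift_word d [] = []"
  by (simp add: shift_word_def)

lemma shift_app[simp]: "shift_word d (u @ v) = shift_word d u @ shift_word d v"
  by (simp add: shift_word_def)
lemma shift_row: "shift_word d (row a q) = row (a+d) q"
  by (simp add: shift_word_def row_def)
lemma shift_rc: "shift_word d (rc s p q) = rc (s+d) p q"
  by (induction p) (simp_all add: rc_Suc shift_row add.commute add.left_commute)

lemma nat_word:
  assumes "inr (s+1) (s+p-1) w" "s + p + q \<le> M"
  shows "braid_eq M (w @ rc s p q) (rc s p q @ shift_word q w)"
  using assms
proof (induction w)
  case Nil then show ?case by (auto intro!: beq_refl rc_valid)
next
  case (Cons l w)
  obtain i where l: "l = (i,True)" using Cons.prems by (cases l) auto
  have ii: "s + 1 \<le> i" "i + 1 \<le> s + p" using Cons.prems l by auto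
  have vs: "valid_word M (shift_word q w)"
    by (rule inr_valid[OF inr_shift[of "s+1" "s+p-1" w q]]) (use Cons.prems ii in auto)
  have s1: "braid_eq M ([(i,True)] @ (w @ rc s p q)) ([(i,True)] @ (rc s p q @ shift_word q w))"
    by (rule beq_appL[OF Cons.IH]) (use Cons.prems l ii in \<open>auto simp: valid_word_def\<close>)
  have s2: "braid_eq M (((i,True) # rc s p q) @ shift_word q w) ((rc s p q @ [(i+q,True)]) @ shift_word q w)"
    by (rule beq_appR[OF nat_letter[OF ii Cons.prems(2)] vs])
  show ?case unfolding l by (rule beq_chain[OF s1 s2]) simp_all
qed

lemma ybe:
  assumes "s + p + q + r \<le> M"
  shows "braid_eq M (rc s p q @ rc (s+q) p r @ rc s q r) (rc (s+p) q r @ rc s p r @ rc (s+r) p q)"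
proof -
  have "braid_eq M (rc s p q @ rc s (p+q) r) (rc s (p+q) r @ shift_word r (rc s p q))"
    by (rule nat_word[OF inr_mono[OF rc_inr]]) (use assms in auto)
  moreover have "rc (s+q) p r @ rc s q r = rc s (p+q) r" using rc_add[of s q p r] by (simp add: add.commute)
  moreover have "rc s (p+q) r = rc (s+p) q r @ rc s p r" by (rule rc_add)
  ultimately show ?thesis by (simp add: shift_rc)
qed


fun wafter :: "bword \<Rightarrow> nat list \<Rightarrow> nat list" where
  "wafter [] ws = ws"
| "wafter (l # w) ws = wafter w (swap_widths ws (fst l))"

lemma cable_append: "cable (u @ v) ws = cable u ws @ cable v (wafter u ws)"
  by (induction u arbitrary: ws) auto

lemma wafter_append: "wafter (u @ v) ws = wafter v (wafter u ws)"
  by (induction u arbitrary: ws) auto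

lemma swap_lemma: "length P + 1 = i \<Longrightarrow> swap_widths (P @ w # y # zs) i = P @ y # w # zs"
  by (auto simp: swap_widths_def list_update_append nth_append)

lemma wafter_row: "length xs = a \<Longrightarrow> length ys = q \<Longrightarrow>
   wafter (row a q) (xs @ w # ys @ zs) = xs @ ys @ w # zs"
proof (induction ys arbitrary: q zs rule: rev_induct)
  case Nil then show ?case by simp
next
  case (snoc y ys)
  then obtain q' where q: "q = Suc q'" "length ys = q'" by auto
  have "wafter (row a q') (xs @ w # ys @ (y # zs)) = xs @ ys @ w # y # zs"
    using snoc q by blast
  then show ?case using snoc.prems q
    by (simp add: row_Suc wafter_append swap_lemma[of "xs @ ys", simplified])
qed

lemma cable_row:
  assumes "length xs = a" "length ys = q" "sum_list (xs @ w # ys @ zs) \<le> M"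
  shows "braid_eq M (cable (row a q) (xs @ w # ys @ zs)) (rc (sum_list xs) w (sum_list ys))"
  using assms
proof (induction ys arbitrary: q zs rule: rev_induct)
  case Nil then show ?case by (simp add: beq_refl)
next
  case (snoc y ys)
  then obtain q' where q: "q = Suc q'" "length ys = q'" by auto
  have IH: "braid_eq M (cable (row a q') (xs @ w # ys @ (y # zs))) (rc (sum_list xs) w (sum_list ys))"
    using snoc q by simp
  have wa: "wafter (row a q') (xs @ w # ys @ (y # zs)) = xs @ ys @ w # y # zs"
    by (rule wafter_row) (use snoc q in auto)
  have lc: "letter_cable (xs @ ys @ w # y # zs) (a + Suc q', True) = rc (sum_list xs + sum_list ys) w y"
    using snoc.prems q by (simp add: letter_cable_def nth_append)
  have e: "cable (row a q) (xs @ w # (ys @ [y]) @ zs) = cable (row a q') (xs @ w # ys @ (y # zs)) @ rc (sum_list xs + sum_list ys) w y"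
    using q wa lc by (simp add: row_Suc cable_append)
  have s1: "braid_eq M (cable (row a q') (xs @ w # ys @ (y # zs)) @ rc (sum_list xs + sum_list ys) w y)
     (rc (sum_list xs) w (sum_list ys) @ rc (sum_list xs + sum_list ys) w y)"
    by (rule beq_appR[OF IH rc_valid]) (use snoc.prems in simp)
  have s2: "braid_eq M (rc (sum_list xs) w (sum_list ys + y)) (rc (sum_list xs) w (sum_list ys) @ rc (sum_list xs + sum_list ys) w y)"
    by (rule rc_split_right) (use snoc.prems in simp)
  show ?case unfolding e using braid_eq.trans[OF s1 braid_eq.sym[OF s2]] by simp
qed

lemma wafter_rc: "length xs = s \<Longrightarrow> length ys = p \<Longrightarrow> length zs = q \<Longrightarrow>
   wafter (rc s p q) (xs @ ys @ zs @ us) = xs @ zs @ ys @ us"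
proof (induction ys arbitrary: p us rule: rev_induct)
  case Nil then show ?case by (induction q) (simp_all)
next
  case (snoc w ys)
  then obtain p' where p: "p = Suc p'" "length ys = p'" by auto
  have "wafter (row (s + p') q) ((xs @ ys) @ w # zs @ us) = (xs @ ys) @ zs @ w # us"
    by (rule wafter_row) (use snoc p in auto)
  moreover have "wafter (rc s p' q) (xs @ ys @ zs @ (w # us)) = xs @ zs @ ys @ (w # us)"
    using snoc p by blast
  ultimately show ?case using p by (simp add: rc_Suc wafter_append)
qed

lemma cable_rc:
  assumes "length xs = s" "length ys = p" "length zs = q" "sum_list (xs @ ys @ zs @ us) \<le> M"
  shows "braid_eq M (cable (rc s p q) (xs @ ys @ zs @ us)) (rc (sum_list xs) (sum_list ys) (sum_list zs))"
  using assms
proof (induction ys arbitrary: p us rule: rev_induct)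
  case Nil then show ?case by (simp add: beq_refl)
next
  case (snoc w ys)
  then obtain p' where p: "p = Suc p'" "length ys = p'" by auto
  have wa: "wafter (row (s + p') q) ((xs @ ys) @ w # zs @ us) = (xs @ ys) @ zs @ w # us"
    by (rule wafter_row) (use snoc p in auto)
  have c1: "braid_eq M (cable (row (s + p') q) ((xs @ ys) @ w # zs @ us)) (rc (sum_list (xs @ ys)) w (sum_list zs))"
    by (rule cable_row) (use snoc p in auto)
  have c2: "braid_eq M (cable (rc s p' q) (xs @ ys @ zs @ (w # us))) (rc (sum_list xs) (sum_list ys) (sum_list zs))"
    using snoc p by simp
  have "braid_eq M (cable (row (s + p') q) ((xs @ ys) @ w # zs @ us) @ cable (rc s p' q) (xs @ ys @ zs @ (w # us)))
     (rc (sum_list (xs @ ys)) w (sum_list zs) @ rc (sum_list xs) (sum_list ys) (sum_list zs))"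
    by (rule beq_app[OF c1 c2])
  moreover have "rc (sum_list xs) (sum_list ys + w) (sum_list zs) = rc (sum_list (xs @ ys)) w (sum_list zs) @ rc (sum_list xs) (sum_list ys) (sum_list zs)"
    by (simp add: rc_add)
  ultimately show ?case using p wa by (simp add: rc_Suc cable_append)
qed


lemma blocks:
  fixes k d :: nat
  assumes pos: "1 \<le> k + d"
  defines "m \<equiv> k + d" and "M \<equiv> 6*k + 3*d"
  shows "braid_eq M (rc k m m @ rc ((k+k)) ((m+m)) m) (rc (k+k+k+d) m m @ rc k m ((m+m)))"
proof -
  define Bmk where "Bmk = rc k m k"
  define Bb2 where "Bb2 = rc ((k+k)) m d"
  define Kc where "Kc = rc (k+(m+m)) k m"
  define Ac where "Ac = rc (k+m) m m"
  define B2c where "B2c = rc ((k+k)) d m"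
  define B2c' where "B2c' = rc ((k+k)+m) d m"
  define Ac' where "Ac' = rc ((k+k)) m m"
  define Bb2' where "Bb2' = rc ((k+k)+m) m d"
  have vBmk: "valid_word M Bmk" unfolding Bmk_def by (rule rc_valid) (simp add: m_def M_def)
  have vBb2: "valid_word M Bb2" unfolding Bb2_def by (rule rc_valid) (simp add: m_def M_def)
  have vKc: "valid_word M Kc" unfolding Kc_def by (rule rc_valid) (simp add: m_def M_def)
  have vB2c': "valid_word M B2c'" unfolding B2c'_def by (rule rc_valid) (simp add: m_def M_def)
  have vAc': "valid_word M Ac'" unfolding Ac'_def by (rule rc_valid) (simp add: m_def M_def)
  have vBb2': "valid_word M Bb2'" unfolding Bb2'_def by (rule rc_valid) (simp add: m_def M_def)
  have vAc: "valid_word M Ac" unfolding Ac_def by (rule rc_valid) (simp add: m_def M_def)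
  have vB2c: "valid_word M B2c" unfolding B2c_def by (rule rc_valid) (simp add: m_def M_def)
  have a: "braid_eq M (rc k m m) (Bmk @ Bb2)"
    using rc_split_right[of k m k d M] unfolding Bmk_def Bb2_def by (simp add: m_def M_def ac_simps)
  have b: "rc ((k+k)) ((m+m)) m = Kc @ Ac @ B2c"
  proof -
    have "rc ((k+k)) (d + (m + k)) m = rc ((k+k)+d) (m+k) m @ rc ((k+k)) d m" by (rule rc_add)
    moreover have "rc ((k+k)+d) (m+k) m = rc ((k+k)+d+m) k m @ rc ((k+k)+d) m m" by (rule rc_add)
    ultimately show ?thesis unfolding Kc_def Ac_def B2c_def by (simp add: m_def ac_simps)
  qed
  have c: "braid_eq M ((Bmk @ Bb2) @ Kc) (Kc @ (Bmk @ Bb2))"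
  proof (rule comm_words[of "k+1" "k+(m+m)-1" _ "k+(m+m)+1" "M-1"])
    show "inr (k + 1) (k + (m+m) - 1) (Bmk @ Bb2)" unfolding Bmk_def Bb2_def
      by (auto intro!: inr_mono[OF rc_inr] simp: m_def)
    show "inr (k + (m+m) + 1) (M - 1) Kc" unfolding Kc_def
      by (auto intro!: inr_mono[OF rc_inr] simp: m_def M_def)
  qed (use pos in \<open>auto simp: m_def M_def\<close>)
  have L: "braid_eq M (rc k m m @ rc ((k+k)) ((m+m)) m) (Kc @ Bmk @ (Bb2 @ Ac @ B2c))"
  proof -
    have s1: "braid_eq M (rc k m m @ (Kc @ Ac @ B2c)) ((Bmk @ Bb2) @ (Kc @ Ac @ B2c))"
      by (rule beq_appR[OF a]) (use vKc vAc vB2c in simp)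
    have s2: "braid_eq M (((Bmk @ Bb2) @ Kc) @ (Ac @ B2c)) ((Kc @ (Bmk @ Bb2)) @ (Ac @ B2c))"
      by (rule beq_appR[OF c]) (use vAc vB2c in simp)
    show ?thesis unfolding b by (rule beq_chain[OF s1 s2]) simp_all
  qed
  have d: "rc (k+k+k+d) m m = Kc @ B2c'"
  proof -
    have "rc ((k+k)+m) (d + k) m = rc ((k+k)+m+d) k m @ rc ((k+k)+m) d m" by (rule rc_add)
    then show ?thesis unfolding Kc_def B2c'_def by (simp add: m_def ac_simps)
  qed
  have e: "braid_eq M (rc k m ((m+m))) (Bmk @ Ac' @ Bb2')"
  proof -
    have e1: "braid_eq M (rc k m (k + (m + d))) (rc k m k @ rc (k+k) m (m + d))"
      by (rule rc_split_right) (simp add: m_def M_def)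
    have e2: "braid_eq M (rc (k+k) m (m + d)) (rc (k+k) m m @ rc (k+k+m) m d)"
      by (rule rc_split_right) (simp add: m_def M_def)
    have e3: "braid_eq M (rc k m k @ rc (k+k) m (m + d)) (rc k m k @ (rc (k+k) m m @ rc (k+k+m) m d))"
      by (rule beq_appL[OF e2 rc_valid]) (simp add: m_def M_def)
    show ?thesis using braid_eq.trans[OF e1 e3] unfolding Bmk_def Ac'_def Bb2'_def
      by (simp add: m_def ac_simps)
  qed
  have f: "braid_eq M (B2c' @ Bmk) (Bmk @ B2c')"
  proof (rule comm_words[of "(k+k)+m+1" "M-1" _ 1 "(k+k)+m-1"])
    show "inr ((k+k)+m+1) (M-1) B2c'" unfolding B2c'_def
      by (auto intro!: inr_mono[OF rc_inr] simp: m_def M_def)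
    show "inr 1 ((k+k)+m-1) Bmk" unfolding Bmk_def
      by (auto intro!: inr_mono[OF rc_inr] simp: m_def)
  qed (use pos in \<open>auto simp: m_def M_def\<close>)
  have R: "braid_eq M (rc (k+k+k+d) m m @ rc k m ((m+m))) (Kc @ Bmk @ (B2c' @ Ac' @ Bb2'))"
  proof -
    have s1: "braid_eq M ((Kc @ B2c') @ rc k m ((m+m))) ((Kc @ B2c') @ (Bmk @ Ac' @ Bb2'))"
      by (rule beq_appL[OF e]) (use vKc vB2c' in simp)
    have s2: "braid_eq M (Kc @ (B2c' @ Bmk) @ (Ac' @ Bb2')) (Kc @ (Bmk @ B2c') @ (Ac' @ Bb2'))"
      by (rule beq_appL[OF beq_appR[OF f]]) (use vKc vAc' vBb2' in simp_all)
    show ?thesis unfolding d by (rule beq_chain[OF s1 s2]) simp_all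
  qed
  have g: "braid_eq M (Bb2 @ Ac @ B2c) (B2c' @ Ac' @ Bb2')"
    using ybe[of "(k+k)" m d m M] unfolding Bb2_def Ac_def B2c_def B2c'_def Ac'_def Bb2'_def
    by (simp add: m_def M_def ac_simps)
  have g': "braid_eq M ((Kc @ Bmk) @ (Bb2 @ Ac @ B2c)) ((Kc @ Bmk) @ (B2c' @ Ac' @ Bb2'))"
    by (rule beq_appL[OF g]) (use vKc vBmk in simp)
  show ?thesis
    by (rule beq_chain[OF beq_trans_eq[OF L g'] braid_eq.sym[OF R]]) simp_all
qed


lemma sum_rep2: "sum_list (replicate k (2::nat)) = k + k" by (induction k) auto
lemma sum_rep1: "sum_list (replicate k (1::nat)) = k" by (induction k) auto
lemma sum_rep1': "sum_list (replicate k (Suc 0)) = k" by (induction k) auto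

theorem proposition1:
  fixes n k :: nat
  assumes "1 \<le> n" and "k \<le> n div 2"
  shows "braid_eq (3 * n) (left_derived n (dpc n k)) (right_derived n (dpc n k))"
proof -
  define d where "d = n - (k + k)"
  have n: "n = k + k + d" using assms unfolding d_def by simp
  define m where "m = k + d"
  have nm: "n = k + m" using n m_def by simp
  have pos: "1 \<le> k + d" using assms n by simp
  have M: "3 * n = 6 * k + 3 * d" using n by simp
  have x: "dpc n k = rc k m m"
  proof (cases "k = 0")
    case True then show ?thesis using nm by (simp add: dpc_def letter_cable_def)
  next
    case False then show ?thesis using nm by (simp add: dpc_def letter_cable_def)
  qed
  have r1: "replicate n (2::nat) = replicate k 2 @ replicate m 2" unfolding nm by (rule replicate_add)
  have r2: "replicate n (1::nat) = replicate m 1 @ replicate k 1" unfolding nm add.commute[of k m] by (rule replicate_add)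
  have r3: "replicate n (1::nat) = replicate k 1 @ replicate m 1" unfolding nm by (rule replicate_add)
  have r4: "replicate n (2::nat) = replicate m 2 @ replicate k 2" unfolding nm add.commute[of k m] by (rule replicate_add)
  have W1: "replicate n (2::nat) @ replicate n 1 = replicate k 2 @ replicate m 2 @ replicate m 1 @ replicate k 1"
    by (simp only: r1 r2 append_assoc)
  have W2: "replicate n (1::nat) @ replicate n 2 = replicate k 1 @ replicate m 1 @ replicate m 2 @ replicate k 2"
    by (simp only: r3 r4 append_assoc)
  have C1: "braid_eq (3*n) (cable (rc k m m) (replicate n 2 @ replicate n 1)) (rc (k+k) (m+m) m)"
    unfolding W1 using cable_rc[of "replicate k (2::nat)" k "replicate m 2" m "replicate m 1" m "replicate k 1" "3*n"] nm
    by (simp add: sum_rep1 sum_rep1' sum_rep2)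
  have C2: "braid_eq (3*n) (cable (rc k m m) (replicate n 1 @ replicate n 2)) (rc k m (m+m))"
    unfolding W2 using cable_rc[of "replicate k (1::nat)" k "replicate m 1" m "replicate m 2" m "replicate k 2" "3*n"] nm
    by (simp add: sum_rep1 sum_rep1' sum_rep2)
  have B: "braid_eq (3*n) (rc k m m @ rc (k+k) (m+m) m) (rc (k+k+k+d) m m @ rc k m (m+m))"
    using blocks[OF pos] unfolding M m_def by simp
  have vx: "valid_word (3*n) (rc k m m)" by (rule rc_valid) (simp add: nm)
  have vs: "valid_word (3*n) (rc (k+k+k+d) m m)" by (rule rc_valid) (simp add: n m_def)
  have s1: "braid_eq (3*n) (rc k m m @ cable (rc k m m) (replicate n 2 @ replicate n 1)) (rc k m m @ rc (k+k) (m+m) m)"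
    by (rule beq_appL[OF C1 vx])
  have s2: "braid_eq (3*n) (rc (k+k+k+d) m m @ cable (rc k m m) (replicate n 1 @ replicate n 2)) (rc (k+k+k+d) m m @ rc k m (m+m))"
    by (rule beq_appL[OF C2 vs])
  have sh: "shift_word n (rc k m m) = rc (k+k+k+d) m m" by (simp add: shift_rc n ac_simps)
  show ?thesis unfolding left_derived_def right_derived_def x sh
    using braid_eq.trans[OF braid_eq.trans[OF s1 B] braid_eq.sym[OF s2]] .
qed

end
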